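(* Let $n$ be a positive integer and $N=2^n$. Let $\delta,\alpha\in(0,1]$ be real numbers with $\alpha\le\delta/2$, $\delta\le2^{-5}$, and $$\frac{2\delta}{\alpha}\log\frac{1}{2\alpha}\le\log N.$$ Then there exists a set $A\subseteq\mathbb{Z}_2^n$ such that $\delta N\le|A|\le8\delta N$, $|\mathcal{R}_\alpha(A)|\ge\frac{\delta}{8\alpha^2}$, and for every integer $k$ with $2\le k\le\frac12\log(1/(8\delta))$ we have $T_k(\mathcal{R}_\alpha(A))\le\frac{8\delta}{\alpha^{2k}}$.
   Context: $\mathbb{Z}_2^n=(\mathbb{Z}/2\mathbb{Z})^n$ with inner product $\langle\vec x,\vec y\rangle=x_1y_1+\dots+x_ny_n\pmod 2$; $\log$ is the logarithm to base $2$. For $f:\mathbb{Z}_2^n\to\mathbb{C}$, $\widehat f(\vec r)=\sum_{\vec x\in\mathbb{Z}_2^n}(-1)^{\langle\vec r,\vec x\rangle}f(\vec x)$; $A(\vec x)$ is the indicator of $A$, and $\mathcal{R}_\alpha(A)=\{\vec r\in\mathbb{Z}_2^n:|\widehat A(\vec r)|\ge\alpha N\}$. For $B\subseteq\mathbb{Z}_2^n$, $T_k(B)=|\{(r_1,\dots,r_k,r_1',\dots,r_k')\in B^{2k}: r_1+\dots+r_k=r_1'+\dots+r_k'\}|$. *)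

theory Defs
  imports "HOL-Analysis.Analysis"
begin

text \<open>Model of Z_2^n: boolean lists of length n (True = 1).\<close>

definition cube :: "nat \<Rightarrow> bool list set" where
  "cube n = {x. length x = n}"

definition vadd :: "bool list \<Rightarrow> bool list \<Rightarrow> bool list" where
  "vadd x y = map2 (\<lambda>a b. a \<noteq> b) x y"

definition vzero :: "nat \<Rightarrow> bool list" where
  "vzero n = replicate n False"

definition ip :: "bool list \<Rightarrow> bool list \<Rightarrow> bool" where
  "ip x y = odd (card {i. i < length x \<and> x ! i \<and> y ! i})"

definition fourier :: "nat \<Rightarrow> bool list set \<Rightarrow> bool list \<Rightarrow> real" where
  "fourier n A r = (\<Sum>x\<in>cube n. (if ip r x then -1 else 1) * (if x \<in> A then 1 else 0))"

definition large_spec :: "nat \<Rightarrow> real \<Rightarrow> bool list set \<Rightarrow> bool list set" where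
  "large_spec n \<alpha> A = {r \<in> cube n. \<bar>fourier n A r\<bar> \<ge> \<alpha> * 2 ^ n}"

definition vsum :: "nat \<Rightarrow> bool list list \<Rightarrow> bool list" where
  "vsum n rs = foldr vadd rs (vzero n)"

definition Tk :: "nat \<Rightarrow> nat \<Rightarrow> bool list set \<Rightarrow> nat" where
  "Tk n k B = card {(rs, rs'). rs \<in> {xs. set xs \<subseteq> B \<and> length xs = k}
      \<and> rs' \<in> {xs. set xs \<subseteq> B \<and> length xs = k} \<and> vsum n rs = vsum n rs'}"

end

theory Submission
  imports Defs
begin

definition symd :: "nat set \<Rightarrow> nat set \<Rightarrow> nat set" where
  "symd A B = (A - B) \<union> (B - A)"
definition SD :: "nat set list \<Rightarrow> nat set" where
  "SD Ws = foldr symd Ws {}"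
definition chi :: "nat set \<Rightarrow> nat set \<Rightarrow> real" where
  "chi R X = (-1) ^ card (R \<inter> X)"
definition blk :: "nat \<Rightarrow> nat \<Rightarrow> nat set" where
  "blk t i = {i*t..<i*t+t}"

lemma sum_Pow_Un:
  assumes "finite I" "finite J" "I \<inter> J = {}"
  shows "(\<Sum>X\<in>Pow (I \<union> J). h X) = (\<Sum>X\<in>Pow I. \<Sum>Y\<in>Pow J. h (X \<union> Y))"
proof -
  have inj: "inj_on (\<lambda>p. fst p \<union> snd p) (Pow I \<times> Pow J)"
  proof (rule inj_onI)
    fix p q assume p: "p \<in> Pow I \<times> Pow J" and q: "q \<in> Pow I \<times> Pow J"
      and e: "fst p \<union> snd p = fst q \<union> snd q"
    have "fst p = (fst p \<union> snd p) \<inter> I" "fst q = (fst q \<union> snd q) \<inter> I"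
      "snd p = (fst p \<union> snd p) \<inter> J" "snd q = (fst q \<union> snd q) \<inter> J"
      using p q assms(3) by auto
    then show "p = q" using e by (simp add: prod_eq_iff)
  qed
  have im: "(\<lambda>p. fst p \<union> snd p) ` (Pow I \<times> Pow J) = Pow (I \<union> J)"
  proof
    show "(\<lambda>p. fst p \<union> snd p) ` (Pow I \<times> Pow J) \<subseteq> Pow (I \<union> J)" by auto
    show "Pow (I \<union> J) \<subseteq> (\<lambda>p. fst p \<union> snd p) ` (Pow I \<times> Pow J)"
    proof
      fix Z assume "Z \<in> Pow (I \<union> J)"
      then have "Z = fst (Z \<inter> I, Z \<inter> J) \<union> snd (Z \<inter> I, Z \<inter> J)" "(Z \<inter> I, Z \<inter> J) \<in> Pow I \<times> Pow J" by auto
      then show "Z \<in> (\<lambda>p. fst p \<union> snd p) ` (Pow I \<times> Pow J)" by blast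
    qed
  qed
  have "(\<Sum>X\<in>Pow I. \<Sum>Y\<in>Pow J. h (X \<union> Y)) = (\<Sum>p\<in>Pow I \<times> Pow J. h (fst p \<union> snd p))"
    by (simp add: sum.cartesian_product split_def)
  also have "\<dots> = (\<Sum>X\<in>Pow (I \<union> J). h X)"
    using sum.reindex[OF inj, of h] im by (simp add: comp_def)
  finally show ?thesis by simp
qed

lemma chi_Un:
  assumes "finite X" "finite Y" "X \<inter> Y = {}"
  shows "chi R (X \<union> Y) = chi R X * chi R Y"
proof -
  have "R \<inter> (X \<union> Y) = (R \<inter> X) \<union> (R \<inter> Y)" by auto
  moreover have "card ((R \<inter> X) \<union> (R \<inter> Y)) = card (R \<inter> X) + card (R \<inter> Y)"
    using assms by (intro card_Un_disjoint) auto
  ultimately show ?thesis unfolding chi_def by (simp add: power_add)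
qed

lemma chi_empty[simp]: "chi R {} = 1" by (simp add: chi_def)

lemma orth:
  assumes "finite I"
  shows "(\<Sum>X\<in>Pow I. chi R X) = (if R \<inter> I = {} then 2 ^ card I else 0)"
  using assms
proof (induction I rule: finite_induct)
  case empty
  then show ?case by simp
next
  case (insert a I)
  have "(\<Sum>X\<in>Pow (insert a I). chi R X) = (\<Sum>X\<in>Pow (I \<union> {a}). chi R X)" by simp
  also have "\<dots> = (\<Sum>X\<in>Pow I. \<Sum>Y\<in>Pow {a}. chi R (X \<union> Y))"
    using insert by (intro sum_Pow_Un) auto
  also have "\<dots> = (\<Sum>X\<in>Pow I. chi R X * (\<Sum>Y\<in>Pow {a}. chi R Y))"
    unfolding sum_distrib_left
  proof (intro sum.cong refl)
    fix X Y assume "X \<in> Pow I" "Y \<in> Pow {a}"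
    then show "chi R (X \<union> Y) = chi R X * chi R Y"
      using insert by (intro chi_Un) (auto intro: finite_subset)
  qed
  also have "(\<Sum>Y\<in>Pow {a}. chi R Y) = (if a \<in> R then 0 else 2)"
    proof -
    have "Pow {a} = {{}, {a}}" by blast
    then show ?thesis by (simp add: chi_def)
  qed
  finally show ?case using insert by (auto simp: sum_distrib_right[symmetric])
qed

definition G :: "nat \<Rightarrow> nat \<Rightarrow> nat set \<Rightarrow> real" where
  "G t m X = (\<Prod>i<m. if X \<inter> blk t i = {} then 0 else 1)"

lemma blk_sub: "i < m \<Longrightarrow> blk t i \<subseteq> {0..<m*t}"
proof -
  assume "i < m"
  then have "i*t + t \<le> m*t" by (metis Suc_leI add.commute mult_Suc mult_le_mono1)
  then show ?thesis unfolding blk_def by auto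
qed

lemma card_blk[simp]: "card (blk t i) = t" by (simp add: blk_def)
lemma finite_blk[simp]: "finite (blk t i)" by (simp add: blk_def)

lemma block_prod:
  "(\<Sum>X\<in>Pow {0..<m*t}. chi R X * G t m X) = (\<Prod>i<m. (if R \<inter> blk t i = {} then 2^t else 0) - 1)"
proof (induction m)
  case 0
  then show ?case by (simp add: G_def)
next
  case (Suc m)
  let ?I = "{0..<m*t}" and ?J = "blk t m"
  have U: "{0..<Suc m * t} = ?I \<union> ?J" by (auto simp: blk_def)
  have D: "?I \<inter> ?J = {}" by (auto simp: blk_def)
  have "(\<Sum>X\<in>Pow {0..<Suc m*t}. chi R X * G t (Suc m) X)
      = (\<Sum>X\<in>Pow ?I. \<Sum>Y\<in>Pow ?J. chi R (X \<union> Y) * G t (Suc m) (X \<union> Y))"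
    unfolding U by (rule sum_Pow_Un) (use D in auto)
  also have "\<dots> = (\<Sum>X\<in>Pow ?I. \<Sum>Y\<in>Pow ?J. (chi R X * G t m X) * (chi R Y * (if Y = {} then 0 else 1)))"
  proof (intro sum.cong refl)
    fix X Y assume X: "X \<in> Pow ?I" and Y: "Y \<in> Pow ?J"
    have c: "chi R (X \<union> Y) = chi R X * chi R Y"
      using X Y D by (intro chi_Un) (auto intro: finite_subset)
    have g1: "(X \<union> Y) \<inter> blk t i = X \<inter> blk t i" if "i < m" for i
      using blk_sub[OF that, of t] Y D by auto
    have g2: "(X \<union> Y) \<inter> blk t m = Y" using X Y D by auto
    have "G t (Suc m) (X \<union> Y) = G t m X * (if Y = {} then 0 else 1)"
      unfolding G_def using g1 g2 by (simp add: lessThan_Suc)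
    then show "chi R (X \<union> Y) * G t (Suc m) (X \<union> Y) = (chi R X * G t m X) * (chi R Y * (if Y = {} then 0 else 1))"
      using c by simp
  qed
  also have "\<dots> = (\<Sum>X\<in>Pow ?I. chi R X * G t m X) * (\<Sum>Y\<in>Pow ?J. chi R Y * (if Y = {} then 0 else 1))"
    by (simp add: sum_product)
  also have "(\<Sum>Y\<in>Pow ?J. chi R Y * (if Y = {} then 0 else 1)) = (\<Sum>Y\<in>Pow ?J. chi R Y) - 1"
  proof -
    have "(\<Sum>Y\<in>Pow ?J. chi R Y) = (\<Sum>Y\<in>Pow ?J. chi R Y * (if Y = {} then 0 else 1)) + chi R {}"
    proof -
      have "(\<Sum>Y\<in>Pow ?J. chi R Y) = (\<Sum>Y\<in>Pow ?J. chi R Y * (if Y = {} then 0 else 1) + (if Y = {} then chi R Y else 0))"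
        by (intro sum.cong) auto
      also have "\<dots> = (\<Sum>Y\<in>Pow ?J. chi R Y * (if Y = {} then 0 else 1)) + chi R {}"
        by (simp add: sum.distrib sum.delta)
      finally show ?thesis .
    qed
    then show ?thesis by simp
  qed
  also have "(\<Sum>Y\<in>Pow ?J. chi R Y) = (if R \<inter> ?J = {} then 2^t else 0)"
    by (simp add: orth)
  finally show ?case using Suc by (simp add: lessThan_Suc)
qed

lemma F_formula:
  assumes "m*t \<le> n"
  shows "(\<Sum>X\<in>Pow {0..<n}. chi R X * G t m X) =
     (if R \<inter> {m*t..<n} = {} then 2^(n - m*t) else 0) * (\<Prod>i<m. (if R \<inter> blk t i = {} then 2^t else 0) - 1)"
proof -
  let ?I = "{0..<m*t}" and ?J = "{m*t..<n}"
  have U: "{0..<n} = ?I \<union> ?J" using assms by auto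
  have D: "?I \<inter> ?J = {}" by auto
  have "(\<Sum>X\<in>Pow {0..<n}. chi R X * G t m X)
      = (\<Sum>X\<in>Pow ?I. \<Sum>Y\<in>Pow ?J. chi R (X \<union> Y) * G t m (X \<union> Y))"
    unfolding U by (rule sum_Pow_Un) (use D in auto)
  also have "\<dots> = (\<Sum>X\<in>Pow ?I. \<Sum>Y\<in>Pow ?J. (chi R X * G t m X) * chi R Y)"
  proof (intro sum.cong refl)
    fix X Y assume X: "X \<in> Pow ?I" and Y: "Y \<in> Pow ?J"
    have XY: "X \<inter> Y = {}" using X Y by fastforce
    have c: "chi R (X \<union> Y) = chi R X * chi R Y"
      using X Y XY by (intro chi_Un) (auto intro: finite_subset)
    have g1: "(X \<union> Y) \<inter> blk t i = X \<inter> blk t i" if "i < m" for i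
      using blk_sub[OF that, of t] Y by fastforce
    have "G t m (X \<union> Y) = G t m X" unfolding G_def using g1 by simp
    then show "chi R (X \<union> Y) * G t m (X \<union> Y) = (chi R X * G t m X) * chi R Y" using c by simp
  qed
  also have "\<dots> = (\<Sum>X\<in>Pow ?I. chi R X * G t m X) * (\<Sum>Y\<in>Pow ?J. chi R Y)"
    by (simp add: sum_product)
  also have "(\<Sum>Y\<in>Pow ?J. chi R Y) = (if R \<inter> ?J = {} then 2^(n - m*t) else 0)"
    by (simp add: orth)
  finally show ?thesis by (simp add: block_prod mult.commute)
qed

definition toset :: "bool list \<Rightarrow> nat set" where
  "toset x = {i. i < length x \<and> x ! i}"
definition ofset :: "nat \<Rightarrow> nat set \<Rightarrow> bool list" where
  "ofset n S = map (\<lambda>i. i \<in> S) [0..<n]"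

lemma toset_sub: "toset x \<subseteq> {0..<length x}" by (auto simp: toset_def)
lemma ofset_cube[simp]: "ofset n S \<in> cube n" by (simp add: ofset_def cube_def)
lemma length_ofset[simp]: "length (ofset n S) = n" by (simp add: ofset_def)
lemma toset_ofset: "S \<subseteq> {0..<n} \<Longrightarrow> toset (ofset n S) = S"
  by (auto simp: toset_def ofset_def)
lemma ofset_toset: "x \<in> cube n \<Longrightarrow> ofset n (toset x) = x"
  by (auto simp: toset_def ofset_def cube_def intro!: nth_equalityI)
lemma cube_image: "cube n = ofset n ` Pow {0..<n}"
proof
  show "cube n \<subseteq> ofset n ` Pow {0..<n}"
  proof
    fix x assume x: "x \<in> cube n"
    then have "toset x \<in> Pow {0..<n}" using toset_sub[of x] by (auto simp: cube_def)
    then show "x \<in> ofset n ` Pow {0..<n}" using ofset_toset[OF x] by (metis image_eqI)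
  qed
qed auto
lemma inj_ofset: "inj_on (ofset n) (Pow {0..<n})"
  by (metis PowD inj_onI toset_ofset)
lemma inj_toset: "inj_on toset (cube n)"
  by (metis inj_onI ofset_toset)
lemma finite_cube[simp]: "finite (cube n)"
  by (simp add: cube_image)
lemma toset_cube: "x \<in> cube n \<Longrightarrow> toset x \<subseteq> {0..<n}"
  using toset_sub[of x] by (auto simp: cube_def)

lemma ip_ofset:
  assumes "length r = n" "S \<subseteq> {0..<n}"
  shows "ip r (ofset n S) = odd (card (toset r \<inter> S))"
proof -
  have "{i. i < length r \<and> r ! i \<and> ofset n S ! i} = toset r \<inter> S"
    using assms by (auto simp: toset_def ofset_def)
  then show ?thesis by (simp add: ip_def)
qed

lemma sign_chi: "(if odd c then -1 else (1::real)) = (-1) ^ c"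
  by simp

lemma fourier_sets:
  assumes "r \<in> cube n"
  shows "fourier n A r = (\<Sum>X\<in>Pow {0..<n}. chi (toset r) X * (if ofset n X \<in> A then 1 else 0))"
proof -
  have "fourier n A r = (\<Sum>x\<in>ofset n ` Pow {0..<n}. (if ip r x then -1 else 1) * (if x \<in> A then 1 else 0))"
    unfolding fourier_def cube_image[symmetric] ..
  also have "\<dots> = (\<Sum>X\<in>Pow {0..<n}. (if ip r (ofset n X) then -1 else 1) * (if ofset n X \<in> A then 1 else 0))"
    by (subst sum.reindex[OF inj_ofset]) (simp add: comp_def)
  also have "\<dots> = (\<Sum>X\<in>Pow {0..<n}. chi (toset r) X * (if ofset n X \<in> A then 1 else 0))"
  proof (intro sum.cong refl)
    fix X assume "X \<in> Pow {0..<n}"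
    then have "ip r (ofset n X) = odd (card (toset r \<inter> X))"
      using assms by (intro ip_ofset) (auto simp: cube_def)
    then show "(if ip r (ofset n X) then -1 else 1) * (if ofset n X \<in> A then 1 else 0) =
        chi (toset r) X * (if ofset n X \<in> A then 1 else (0::real))"
      by (simp add: chi_def)
  qed
  finally show ?thesis .
qed

definition Aset :: "nat \<Rightarrow> nat \<Rightarrow> nat \<Rightarrow> bool list set" where
  "Aset n t m = {x \<in> cube n. \<exists>i<m. toset x \<inter> blk t i = {}}"

definition Fval :: "nat \<Rightarrow> nat \<Rightarrow> nat \<Rightarrow> nat set \<Rightarrow> real" where
  "Fval n t m R = (if R \<inter> {m*t..<n} = {} then 2^(n - m*t) else 0) * (\<Prod>i<m. (if R \<inter> blk t i = {} then 2^t else 0) - 1)"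

lemma G_val: "G t m X = (if \<exists>i<m. X \<inter> blk t i = {} then 0 else 1)"
  unfolding G_def by (auto simp: prod_zero_iff)

lemma fourier_A:
  assumes "r \<in> cube n" "m*t \<le> n"
  shows "fourier n (Aset n t m) r = (if toset r = {} then 2^n else 0) - Fval n t m (toset r)"
proof -
  have "fourier n (Aset n t m) r = (\<Sum>X\<in>Pow {0..<n}. chi (toset r) X - chi (toset r) X * G t m X)"
    unfolding fourier_sets[OF assms(1)]
  proof (intro sum.cong refl)
    fix X assume X: "X \<in> Pow {0..<n}"
    have "(ofset n X \<in> Aset n t m) = (\<exists>i<m. X \<inter> blk t i = {})"
      using X by (simp add: Aset_def toset_ofset)
    then show "chi (toset r) X * (if ofset n X \<in> Aset n t m then 1 else 0) = chi (toset r) X - chi (toset r) X * G t m X"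
      by (auto simp: G_val)
  qed
  also have "\<dots> = (\<Sum>X\<in>Pow {0..<n}. chi (toset r) X) - (\<Sum>X\<in>Pow {0..<n}. chi (toset r) X * G t m X)"
    by (simp add: sum_subtractf)
  also have "(\<Sum>X\<in>Pow {0..<n}. chi (toset r) X) = (if toset r = {} then 2^n else 0)"
    using toset_cube[OF assms(1)] by (subst orth) auto
  finally show ?thesis using F_formula[OF assms(2)] by (simp add: Fval_def)
qed

lemma card_A:
  assumes "m*t \<le> n"
  shows "real (card (Aset n t m)) = 2^n - 2^(n - m*t) * (2^t - 1)^m"
proof -
  have z: "vzero n \<in> cube n" by (simp add: vzero_def cube_def)
  have tz: "toset (vzero n) = {}" by (simp add: vzero_def toset_def)
  have ipz: "\<not> ip (vzero n) x" for x
  proof -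
    have "{i. i < length (vzero n) \<and> vzero n ! i \<and> x ! i} = {}" by (auto simp: vzero_def)
    then show ?thesis unfolding ip_def by (metis card.empty even_zero)
  qed
  have "fourier n (Aset n t m) (vzero n) = (\<Sum>x\<in>cube n. if x \<in> Aset n t m then 1 else 0)"
    by (simp add: fourier_def ipz)
  also have "\<dots> = card {x \<in> cube n. x \<in> Aset n t m}"
    by (simp add: sum.inter_filter[symmetric])
  also have "{x \<in> cube n. x \<in> Aset n t m} = Aset n t m" by (auto simp: Aset_def)
  finally have "real (card (Aset n t m)) = fourier n (Aset n t m) (vzero n)" by simp
  also have "\<dots> = 2^n - Fval n t m {}" using fourier_A[OF z assms] tz by simp
  finally show ?thesis by (simp add: Fval_def)
qed

lemma blk_disj: "i \<noteq> j \<Longrightarrow> blk t i \<inter> blk t j = {}"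
proof -
  have *: "blk t i \<inter> blk t j = {}" if "i < j" for i j
  proof -
    have "i*t + t \<le> j*t" using that by (metis Suc_leI add.commute mult_Suc mult_le_mono1)
    then show ?thesis by (auto simp: blk_def)
  qed
  assume "i \<noteq> j"
  then show ?thesis using *[of i j] *[of j i] by (cases "i < j") auto
qed

lemma in_blk: "x < m*t \<Longrightarrow> x \<in> blk t (x div t) \<and> x div t < m"
proof -
  assume a: "x < m*t"
  then have tp: "t > 0" by (cases t) auto
  have "x div t * t \<le> x" by (simp add: div_times_less_eq_dividend)
  moreover have "x < x div t * t + t" using tp by (metis add.commute div_mult_mod_eq mod_less_divisor nat_add_left_cancel_less)
  moreover have "x div t < m" using a tp by (simp add: div_less_iff_less_mult)
  ultimately show ?thesis by (auto simp: blk_def)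
qed

lemma abs_Fval:
  "\<bar>Fval n t m R\<bar> = (if R \<inter> {m*t..<n} = {} then 2^(n - m*t) else 0) * (2^t - 1) ^ card {i\<in>{..<m}. R \<inter> blk t i = {}}"
proof -
  have "\<bar>\<Prod>i<m. (if R \<inter> blk t i = {} then 2^t else 0) - (1::real)\<bar> = (\<Prod>i<m. if R \<inter> blk t i = {} then 2^t - 1 else 1)"
    unfolding abs_prod by (intro prod.cong refl) auto
  also have "\<dots> = (\<Prod>i\<in>{i\<in>{..<m}. R \<inter> blk t i = {}}. 2^t - 1)"
    by (subst prod.inter_filter) auto
  also have "\<dots> = (2^t - 1) ^ card {i\<in>{..<m}. R \<inter> blk t i = {}}" by simp
  finally show ?thesis unfolding Fval_def abs_mult by simp
qed

lemma symd_assoc: "symd (symd A B) C = symd A (symd B C)" by (auto simp: symd_def)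
lemma symd_empty[simp]: "symd {} B = B" "symd B {} = B" by (auto simp: symd_def)
lemma symd_self_iff: "symd A B = {} \<longleftrightarrow> A = B" by (auto simp: symd_def)
lemma symd_eq_iff: "symd W X = T \<longleftrightarrow> X = symd W T" by (auto simp: symd_def)

lemma SD_Nil[simp]: "SD [] = {}" by (simp add: SD_def)
lemma SD_Cons[simp]: "SD (W # Ws) = symd W (SD Ws)" by (simp add: SD_def)
lemma SD_append: "SD (xs @ ys) = symd (SD xs) (SD ys)"
  by (induction xs) (auto simp: symd_assoc)

lemma vadd_props:
  assumes "length x = length y"
  shows "length (vadd x y) = length x" "toset (vadd x y) = symd (toset x) (toset y)"
  using assms by (auto simp: vadd_def toset_def symd_def)

lemma vsum_props:
  "set rs \<subseteq> cube n \<Longrightarrow> vsum n rs \<in> cube n \<and> toset (vsum n rs) = SD (map toset rs)"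
proof (induction rs)
  case Nil
  have "toset (vzero n) = {}" by (simp add: vzero_def toset_def)
  then show ?case by (simp add: vsum_def vzero_def cube_def)
next
  case (Cons r rs)
  then have r: "length r = n" and IH: "vsum n rs \<in> cube n" "toset (vsum n rs) = SD (map toset rs)"
    by (auto simp: cube_def)
  have e: "vsum n (r # rs) = vadd r (vsum n rs)" by (simp add: vsum_def)
  have l: "length r = length (vsum n rs)" using r IH by (simp add: cube_def)
  show ?case unfolding e using vadd_props[OF l] IH r by (simp add: cube_def)
qed

definition LA :: "nat \<Rightarrow> nat list \<Rightarrow> nat set list set" where
  "LA t b = {Ws. list_all2 (\<lambda>W a. W \<subseteq> blk t a) Ws b}"

lemma LA_Nil: "LA t [] = {[]}" by (auto simp: LA_def)
lemma LA_Cons: "LA t (a # b) = (\<lambda>p. fst p # snd p) ` (Pow (blk t a) \<times> LA t b)"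
  by (auto simp: LA_def list_all2_Cons2 image_iff)

lemma finite_LA: "finite (LA t b)"
  by (induction b) (auto simp: LA_Nil LA_Cons)

lemma SD_LA: "Ws \<in> LA t b \<Longrightarrow> SD Ws \<subseteq> (\<Union>a\<in>set b. blk t a)"
proof (induction b arbitrary: Ws)
  case Nil
  then show ?case by (simp add: LA_Nil)
next
  case (Cons a b)
  then obtain W Ws' where "Ws = W # Ws'" "W \<subseteq> blk t a" "Ws' \<in> LA t b"
    by (auto simp: LA_Cons)
  then show ?case using Cons.IH[of Ws'] by (auto simp: symd_def)
qed

lemma count_LA: "card {Ws \<in> LA t b. SD Ws = T} \<le> 2^(t * (length b - card (set b)))"
proof (induction b arbitrary: T)
  case Nil
  have "{Ws \<in> LA t []. SD Ws = T} \<subseteq> {[]}" by (auto simp: LA_Nil)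
  then have "card {Ws \<in> LA t []. SD Ws = T} \<le> card {[]::nat set list}" by (intro card_mono) auto
  then have "card {Ws \<in> LA t []. SD Ws = T} \<le> 1" by simp
  then show ?case by simp
next
  case (Cons a b)
  have cl: "card (set b) \<le> length b" by (rule card_length)
  have S: "{Ws \<in> LA t (a # b). SD Ws = T} = (\<Union>W\<in>Pow (blk t a). (\<lambda>Ws. W # Ws) ` {Ws \<in> LA t b. SD Ws = symd W T})"
  proof
    show "{Ws \<in> LA t (a # b). SD Ws = T} \<subseteq> (\<Union>W\<in>Pow (blk t a). (\<lambda>Ws. W # Ws) ` {Ws \<in> LA t b. SD Ws = symd W T})"
    proof
      fix Ws assume "Ws \<in> {Ws \<in> LA t (a # b). SD Ws = T}"
      then obtain W Ws' where W: "Ws = W # Ws'" "W \<subseteq> blk t a" "Ws' \<in> LA t b" "symd W (SD Ws') = T"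
        by (auto simp: LA_Cons)
      then have "SD Ws' = symd W T" by (simp add: symd_eq_iff)
      then have "Ws \<in> (\<lambda>Ws. W # Ws) ` {Ws \<in> LA t b. SD Ws = symd W T}" using W by blast
      then show "Ws \<in> (\<Union>W\<in>Pow (blk t a). (\<lambda>Ws. W # Ws) ` {Ws \<in> LA t b. SD Ws = symd W T})"
        using W(2) by blast
    qed
    show "(\<Union>W\<in>Pow (blk t a). (\<lambda>Ws. W # Ws) ` {Ws \<in> LA t b. SD Ws = symd W T}) \<subseteq> {Ws \<in> LA t (a # b). SD Ws = T}"
    proof
      fix Ws assume "Ws \<in> (\<Union>W\<in>Pow (blk t a). (\<lambda>Ws. W # Ws) ` {Ws \<in> LA t b. SD Ws = symd W T})"
      then obtain W Ws' where W: "Ws = W # Ws'" "W \<subseteq> blk t a" "Ws' \<in> LA t b" "SD Ws' = symd W T"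
        by blast
      have "Ws \<in> LA t (a # b)" unfolding LA_Cons using W by force
      moreover have "SD Ws = T" using W by (simp add: symd_eq_iff[symmetric])
      ultimately show "Ws \<in> {Ws \<in> LA t (a # b). SD Ws = T}" by simp
    qed
  qed
  show ?case
  proof (cases "a \<in> set b")
    case True
    have "card {Ws \<in> LA t (a # b). SD Ws = T} \<le> (\<Sum>W\<in>Pow (blk t a). card ((\<lambda>Ws. W # Ws) ` {Ws \<in> LA t b. SD Ws = symd W T}))"
      unfolding S by (rule card_UN_le) simp
    also have "\<dots> \<le> (\<Sum>W\<in>Pow (blk t a). 2^(t * (length b - card (set b))))"
    proof (intro sum_mono)
      fix W
      have "card ((\<lambda>Ws. W # Ws) ` {Ws \<in> LA t b. SD Ws = symd W T}) \<le> card {Ws \<in> LA t b. SD Ws = symd W T}"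
        by (rule card_image_le) (simp add: finite_LA)
      also have "\<dots> \<le> 2^(t * (length b - card (set b)))" by (rule Cons.IH)
      finally show "card ((\<lambda>Ws. W # Ws) ` {Ws \<in> LA t b. SD Ws = symd W T}) \<le> 2^(t * (length b - card (set b)))" .
    qed
    also have "\<dots> = 2^t * 2^(t * (length b - card (set b)))" by (simp add: card_Pow)
    also have "\<dots> = 2^(t * (length (a # b) - card (set (a # b))))"
    proof -
      have "t * (length (a # b) - card (set (a # b))) = t + t * (length b - card (set b))"
        using True cl by (simp add: insert_absorb Suc_diff_le)
      then show ?thesis by (simp add: power_add)
    qed
    finally show ?thesis .
  next
    case False
    let ?W = "T \<inter> blk t a"
    have sub: "{Ws \<in> LA t (a # b). SD Ws = T} \<subseteq> (\<lambda>Ws. ?W # Ws) ` {Ws \<in> LA t b. SD Ws = symd ?W T}"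
    proof
      fix Ws assume "Ws \<in> {Ws \<in> LA t (a # b). SD Ws = T}"
      then obtain W Ws' where W: "Ws = W # Ws'" "W \<subseteq> blk t a" "Ws' \<in> LA t b" "symd W (SD Ws') = T"
        by (auto simp: LA_Cons)
      have "SD Ws' \<inter> blk t a = {}"
      proof -
        have "blk t c \<inter> blk t a = {}" if "c \<in> set b" for c
          using that False by (intro blk_disj) auto
        then show ?thesis using SD_LA[OF W(3)] by blast
      qed
      then have "W = ?W" using W(2,4) by (auto simp: symd_def)
      then show "Ws \<in> (\<lambda>Ws. ?W # Ws) ` {Ws \<in> LA t b. SD Ws = symd ?W T}"
        using W by (auto simp: symd_eq_iff)
    qed
    have "card {Ws \<in> LA t (a # b). SD Ws = T} \<le> card ((\<lambda>Ws. ?W # Ws) ` {Ws \<in> LA t b. SD Ws = symd ?W T})"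
      by (rule card_mono[OF _ sub]) (simp add: finite_LA)
    also have "\<dots> \<le> card {Ws \<in> LA t b. SD Ws = symd ?W T}"
      by (rule card_image_le) (simp add: finite_LA)
    also have "\<dots> \<le> 2^(t * (length b - card (set b)))" by (rule Cons.IH)
    also have "\<dots> = 2^(t * (length (a # b) - card (set (a # b))))"
      using False by simp
    finally show ?thesis .
  qed
qed

lemma spec_char:
  assumes mt: "m*t \<le> n" and m1: "1 \<le> m" and ap: "0 < \<alpha>"
    and H1: "\<alpha> * 2^n \<le> real (card (Aset n t m))"
    and H2: "\<alpha> * 2^n \<le> 2^(n - m*t) * (2^t - 1)^(m - 1)"
    and H3: "2^(n - m*t) * (2^t)^(m - 2) < \<alpha> * 2^n"
  shows "large_spec n \<alpha> (Aset n t m) = {r \<in> cube n. \<exists>i<m. toset r \<subseteq> blk t i}"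
proof -
  have key: "(\<alpha> * 2^n \<le> \<bar>fourier n (Aset n t m) r\<bar>) = (\<exists>i<m. toset r \<subseteq> blk t i)" if r: "r \<in> cube n" for r
  proof -
    let ?R = "toset r"
    let ?E = "{i\<in>{..<m}. ?R \<inter> blk t i = {}}"
    have Rn: "?R \<subseteq> {0..<n}" using toset_cube[OF r] .
    have fA: "fourier n (Aset n t m) r = (if ?R = {} then 2^n else 0) - Fval n t m ?R"
      using fourier_A[OF r mt] .
    show ?thesis
    proof (cases "?R = {}")
      case True
      have "fourier n (Aset n t m) r = 2^n - Fval n t m {}" using fA True by simp
      also have "\<dots> = real (card (Aset n t m))" using card_A[OF mt] by (simp add: Fval_def)
      finally have "\<alpha> * 2^n \<le> \<bar>fourier n (Aset n t m) r\<bar>" using H1 by simp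
      moreover have "\<exists>i<m. ?R \<subseteq> blk t i" using True m1 by (intro exI[of _ 0]) auto
      ultimately show ?thesis by simp
    next
      case False
      then have fa: "\<bar>fourier n (Aset n t m) r\<bar> = \<bar>Fval n t m ?R\<bar>" using fA by simp
      show ?thesis
      proof (cases "\<exists>i<m. ?R \<subseteq> blk t i")
        case True
        then obtain i0 where i0: "i0 < m" "?R \<subseteq> blk t i0" by blast
        have rest: "?R \<inter> {m*t..<n} = {}" using i0 blk_sub[of i0 m t] by auto
        have E: "?E = {..<m} - {i0}"
        proof
          show "?E \<subseteq> {..<m} - {i0}" using i0 False by auto
          show "{..<m} - {i0} \<subseteq> ?E"
          proof
            fix j assume j: "j \<in> {..<m} - {i0}"
            then have "blk t i0 \<inter> blk t j = {}" by (intro blk_disj) auto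
            then show "j \<in> ?E" using j i0 by blast
          qed
        qed
        have cE: "card ?E = m - 1" using E i0 by simp
        have "\<bar>Fval n t m ?R\<bar> = 2^(n - m*t) * (2^t - 1)^(m - 1)"
          unfolding abs_Fval using rest cE by simp
        then show ?thesis using H2 fa True by simp
      next
        case nb: False
        have "\<bar>Fval n t m ?R\<bar> < \<alpha> * 2^n"
        proof (cases "?R \<inter> {m*t..<n} = {}")
          case False
          then show ?thesis unfolding abs_Fval using ap by simp
        next
          case rest: True
          have Rm: "?R \<subseteq> {0..<m*t}"
          proof
            fix z assume z: "z \<in> ?R"
            then have "z < n" using Rn by auto
            moreover have "z \<notin> {m*t..<n}" using z rest by blast
            ultimately show "z \<in> {0..<m*t}" by auto
          qed
          obtain x where x: "x \<in> ?R" using \<open>?R \<noteq> {}\<close> by blast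
          define i0 where "i0 = x div t"
          have xi0: "x \<in> blk t i0" "i0 < m" using in_blk[of x m t] Rm x unfolding i0_def by auto
          obtain y where y: "y \<in> ?R" "y \<notin> blk t i0" using nb xi0 by blast
          define i1 where "i1 = y div t"
          have yi1: "y \<in> blk t i1" "i1 < m" using in_blk[of y m t] Rm y unfolding i1_def by auto
          have ne: "i0 \<noteq> i1" using y yi1 by auto
          have "?E \<subseteq> {..<m} - {i0, i1}" using x y xi0 yi1 by auto
          then have "card ?E \<le> card ({..<m} - {i0, i1})" by (intro card_mono) auto
          also have "\<dots> = m - 2" using xi0 yi1 ne by (simp add: card_Diff_subset)
          finally have cE: "card ?E \<le> m - 2" .
          have "(2::real)^t - 1 \<ge> 0" by simp
          have "((2::real)^t - 1) ^ card ?E \<le> (2^t) ^ card ?E"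
            by (intro power_mono) auto
          also have "\<dots> \<le> (2^t) ^ (m - 2)"
            by (intro power_increasing cE) simp
          finally have "\<bar>Fval n t m ?R\<bar> \<le> 2^(n - m*t) * (2^t)^(m - 2)"
            unfolding abs_Fval using rest by simp
          then show ?thesis using H3 by linarith
        qed
        then show ?thesis using fa nb by simp
      qed
    qed
  qed
  show ?thesis unfolding large_spec_def using key by auto
qed

lemma card_spec_lower:
  assumes mt: "m*t \<le> n"
  shows "m * (2^t - 1) \<le> card {r \<in> cube n. \<exists>i<m. toset r \<subseteq> blk t i}"
proof -
  let ?U = "\<Union>i<m. Pow (blk t i) - {{}}"
  have cU: "card ?U = m * (2^t - 1)"
  proof -
    have "card ?U = (\<Sum>i<m. card (Pow (blk t i) - {{}}))"
    proof (rule card_UN_disjoint)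
      show "\<forall>i\<in>{..<m}. \<forall>j\<in>{..<m}. i \<noteq> j \<longrightarrow> (Pow (blk t i) - {{}}) \<inter> (Pow (blk t j) - {{}}) = {}"
      proof (intro ballI impI)
        fix i j :: nat assume "i \<noteq> j"
        then have d: "blk t i \<inter> blk t j = {}" by (rule blk_disj)
        show "(Pow (blk t i) - {{}}) \<inter> (Pow (blk t j) - {{}}) = {}"
        proof (rule ccontr)
          assume "(Pow (blk t i) - {{}}) \<inter> (Pow (blk t j) - {{}}) \<noteq> {}"
          then obtain X where "X \<subseteq> blk t i" "X \<subseteq> blk t j" "X \<noteq> {}" by blast
          then show False using d by blast
        qed
      qed
    qed auto
    also have "\<dots> = (\<Sum>i<m. 2^t - 1)"
    proof (intro sum.cong refl)
      fix i assume "i \<in> {..<m}"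
      have "card (Pow (blk t i) - {{}}) = card (Pow (blk t i)) - 1"
        by (intro card_Diff_singleton) auto
      then show "card (Pow (blk t i) - {{}}) = 2^t - 1" by (simp add: card_Pow)
    qed
    finally show ?thesis by simp
  qed
  have sub: "?U \<subseteq> Pow {0..<n}"
  proof
    fix R assume "R \<in> ?U"
    then obtain i where "i < m" "R \<subseteq> blk t i" by blast
    then show "R \<in> Pow {0..<n}" using blk_sub[of i m t] mt by auto
  qed
  have "card (ofset n ` ?U) = card ?U"
    using inj_on_subset[OF inj_ofset sub] by (rule card_image)
  moreover have "ofset n ` ?U \<subseteq> {r \<in> cube n. \<exists>i<m. toset r \<subseteq> blk t i}"
  proof
    fix r assume "r \<in> ofset n ` ?U"
    then obtain R where R: "r = ofset n R" "R \<in> ?U" by blast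
    then obtain i where i: "i < m" "R \<subseteq> blk t i" by blast
    have "toset r = R" using sub R by (simp add: toset_ofset subset_eq)
    then show "r \<in> {r \<in> cube n. \<exists>i<m. toset r \<subseteq> blk t i}" using R i by auto
  qed
  moreover have "finite {r \<in> cube n. \<exists>i<m. toset r \<subseteq> blk t i}" by simp
  ultimately have "card ?U \<le> card {r \<in> cube n. \<exists>i<m. toset r \<subseteq> blk t i}"
    using card_mono[of "{r \<in> cube n. \<exists>i<m. toset r \<subseteq> blk t i}" "ofset n ` ?U"] by linarith
  then show ?thesis using cU by simp
qed

definition Lab :: "nat \<Rightarrow> nat \<Rightarrow> nat list set" where
  "Lab m J = {b. set b \<subseteq> {..<m} \<and> length b = J}"

lemma finite_Lab: "finite (Lab m J)"
  unfolding Lab_def by (rule finite_lists_length_eq) simp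

lemma Tk_bound:
  "Tk n k {r \<in> cube n. \<exists>i<m. toset r \<subseteq> blk t i} \<le> (\<Sum>b\<in>Lab m (2*k). 2^(t * (2*k - card (set b))))"
proof -
  let ?B = "{r \<in> cube n. \<exists>i<m. toset r \<subseteq> blk t i}"
  let ?L = "{xs. set xs \<subseteq> ?B \<and> length xs = k}"
  let ?S = "{(rs, rs'). rs \<in> ?L \<and> rs' \<in> ?L \<and> vsum n rs = vsum n rs'}"
  let ?f = "\<lambda>p. map toset (fst p @ snd p)"
  let ?U = "\<Union>b\<in>Lab m (2*k). {Ws \<in> LA t b. SD Ws = {}}"
  have inj: "inj_on ?f ?S"
  proof (rule inj_onI)
    fix p q assume p: "p \<in> ?S" and q: "q \<in> ?S" and e: "?f p = ?f q"
    have "inj_on toset (set (fst p @ snd p) \<union> set (fst q @ snd q))"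
      using p q by (intro inj_on_subset[OF inj_toset]) auto
    then have "fst p @ snd p = fst q @ snd q" by (rule map_inj_on[OF e])
    moreover have "length (fst p) = length (fst q)" using p q by auto
    ultimately show "p = q" by (simp add: prod_eq_iff)
  qed
  have img: "?f ` ?S \<subseteq> ?U"
  proof
    fix Ws assume "Ws \<in> ?f ` ?S"
    then obtain rs rs' where R: "Ws = map toset (rs @ rs')" "rs \<in> ?L" "rs' \<in> ?L" "vsum n rs = vsum n rs'"
      by auto
    have c1: "set rs \<subseteq> cube n" "set rs' \<subseteq> cube n" using R by auto
    have "SD Ws = symd (SD (map toset rs)) (SD (map toset rs'))"
      unfolding R(1) by (simp add: SD_append)
    also have "\<dots> = symd (toset (vsum n rs)) (toset (vsum n rs'))"
      using vsum_props[OF c1(1)] vsum_props[OF c1(2)] by simp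
    also have "\<dots> = {}" using R(4) by (simp add: symd_def)
    finally have sd: "SD Ws = {}" .
    have ex: "\<exists>i. i < m \<and> W \<subseteq> blk t i" if "W \<in> set Ws" for W
      using that R by auto
    define g where "g = (\<lambda>W. SOME i. i < m \<and> W \<subseteq> blk t i)"
    have g: "g W < m \<and> W \<subseteq> blk t (g W)" if "W \<in> set Ws" for W
      unfolding g_def using someI_ex[OF ex[OF that]] .
    have "map g Ws \<in> Lab m (2*k)" using g R by (auto simp: Lab_def)
    moreover have "Ws \<in> LA t (map g Ws)"
      unfolding LA_def using g by (simp add: list_all2_map2 list_all2_same)
    ultimately show "Ws \<in> ?U" using sd by blast
  qed
  have fU: "finite ?U" by (intro finite_UN_I finite_Lab) (simp add: finite_LA)
  have "Tk n k ?B = card ?S" unfolding Tk_def by simp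
  also have "\<dots> = card (?f ` ?S)" using card_image[OF inj] by simp
  also have "\<dots> \<le> card ?U" by (rule card_mono[OF fU img])
  also have "\<dots> \<le> (\<Sum>b\<in>Lab m (2*k). card {Ws \<in> LA t b. SD Ws = {}})"
    by (rule card_UN_le[OF finite_Lab])
  also have "\<dots> \<le> (\<Sum>b\<in>Lab m (2*k). 2^(t * (2*k - card (set b))))"
  proof (rule sum_mono)
    fix b assume "b \<in> Lab m (2*k)"
    then have "length b = 2*k" by (simp add: Lab_def)
    then show "card {Ws \<in> LA t b. SD Ws = {}} \<le> 2^(t * (2*k - card (set b)))"
      using count_LA[of t b "{}"] by simp
  qed
  finally show ?thesis .
qed

lemma card_Lab_l: "card {b \<in> Lab m J. card (set b) = l} \<le> (m choose l) * l^J"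
proof -
  let ?Ls = "{L. L \<subseteq> {..<m} \<and> card L = l}"
  have sub: "{b \<in> Lab m J. card (set b) = l} \<subseteq> (\<Union>L\<in>?Ls. {b. set b \<subseteq> L \<and> length b = J})"
    by (auto simp: Lab_def)
  have fin: "finite ?Ls" by simp
  have "card {b \<in> Lab m J. card (set b) = l} \<le> card (\<Union>L\<in>?Ls. {b. set b \<subseteq> L \<and> length b = J})"
  proof (rule card_mono[OF _ sub])
    show "finite (\<Union>L\<in>?Ls. {b. set b \<subseteq> L \<and> length b = J})"
    proof (rule finite_UN_I[OF fin])
      fix L assume "L \<in> ?Ls"
      then have "finite L" using finite_subset by blast
      then show "finite {b. set b \<subseteq> L \<and> length b = J}" by (rule finite_lists_length_eq)
    qed
  qed
  also have "\<dots> \<le> (\<Sum>L\<in>?Ls. card {b. set b \<subseteq> L \<and> length b = J})"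
    by (rule card_UN_le[OF fin])
  also have "\<dots> = (\<Sum>L\<in>?Ls. l^J)"
  proof (intro sum.cong refl)
    fix L assume L: "L \<in> ?Ls"
    then have "finite L" using finite_subset by blast
    then show "card {b. set b \<subseteq> L \<and> length b = J} = l^J" using L by (simp add: card_lists_length_eq)
  qed
  also have "\<dots> = (m choose l) * l^J" using n_subsets[of "{..<m}" l] by simp
  finally show ?thesis .
qed

lemma lab_sum:
  "(\<Sum>b\<in>Lab m J. (2::nat)^(t * (J - card (set b)))) \<le> (\<Sum>l\<le>J. (m choose l) * l^J * 2^(t * (J - l)))"
proof -
  have gs: "(\<lambda>b. card (set b)) ` Lab m J \<subseteq> {..J}"
    using card_length by (auto simp: Lab_def)
  have "(\<Sum>b\<in>Lab m J. (2::nat)^(t * (J - card (set b))))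
      = (\<Sum>l\<le>J. \<Sum>b\<in>{b \<in> Lab m J. card (set b) = l}. 2^(t * (J - card (set b))))"
    by (rule sum.group[OF finite_Lab finite_atMost gs, symmetric])
  also have "\<dots> = (\<Sum>l\<le>J. card {b \<in> Lab m J. card (set b) = l} * 2^(t * (J - l)))"
    by (intro sum.cong refl) simp
  also have "\<dots> \<le> (\<Sum>l\<le>J. (m choose l) * l^J * 2^(t * (J - l)))"
    by (intro sum_mono mult_right_mono card_Lab_l) simp
  finally show ?thesis .
qed

lemma bern: "(x::real) \<ge> -1 \<Longrightarrow> 1 + real n * x \<le> (1 + x)^n"
proof (induction n)
  case 0
  then show ?case by simp
next
  case (Suc n)
  have h: "0 \<le> x * x * real n" by simp
  have "1 + real (Suc n) * x \<le> (1 + real n * x) * (1 + x)"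
    using h by (simp add: algebra_simps)
  also have "\<dots> \<le> (1 + x)^n * (1 + x)"
    using Suc by (intro mult_right_mono) auto
  finally show ?case by (simp add: mult.commute)
qed

lemma le_pow2_pred: "1 \<le> l \<Longrightarrow> l \<le> (2::nat)^(l - 1)"
proof -
  assume "1 \<le> l"
  have "l - 1 < 2^(l - 1)" by (rule less_exp)
  then show ?thesis using \<open>1 \<le> l\<close> by linarith
qed

lemma term_bound:
  fixes \<mu> :: real
  assumes "0 \<le> \<mu>" "\<mu> * 2^J \<le> 1" "1 \<le> l"
  shows "\<mu>^l * real l^J \<le> \<mu>"
proof -
  have r: "real l \<le> real ((2::nat)^(l - 1))" using le_pow2_pred[OF assms(3)] by (simp only: of_nat_le_iff)
  have "real l ^ J \<le> ((2::real)^(l - 1))^J"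
    using r by (intro power_mono) auto
  also have "((2::real)^(l - 1))^J = (2^J)^(l - 1)" by (metis power_mult mult.commute)
  finally have "real l ^ J \<le> (2^J)^(l - 1)" .
  then have "\<mu>^(l - 1) * real l^J \<le> \<mu>^(l - 1) * (2^J)^(l - 1)"
    using assms by (intro mult_left_mono) auto
  also have "\<dots> = (\<mu> * 2^J)^(l - 1)" by (simp add: power_mult_distrib)
  also have "\<dots> \<le> 1" using assms by (intro power_le_one) auto
  finally have "\<mu>^(l - 1) * real l^J \<le> 1" .
  then have "\<mu> * (\<mu>^(l - 1) * real l^J) \<le> \<mu>" using assms(1) by (simp add: mult_left_le)
  moreover have "\<mu>^l = \<mu> * \<mu>^(l - 1)" using assms(3) by (cases l) auto 
  ultimately show ?thesis by (simp add: mult.assoc)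
qed

lemma final_sum:
  fixes T \<mu> :: real
  assumes Tt: "T = 2^t" and T: "T > 0" and mu: "real m = \<mu> * T" "0 \<le> \<mu>" "\<mu> * 2^J \<le> 1" and J: "1 \<le> J"
  shows "real (\<Sum>l\<le>J. (m choose l) * l^J * 2^(t * (J - l))) \<le> (real J + 1) * T^J * \<mu>"
proof -
  have "real (\<Sum>l\<le>J. (m choose l) * l^J * 2^(t * (J - l))) = (\<Sum>l\<le>J. real (m choose l) * real l^J * T^(J - l))"
    using Tt by (simp add: power_mult)
  also have "\<dots> \<le> (\<Sum>l\<le>J. T^J * \<mu>)"
  proof (rule sum_mono)
    fix l assume l: "l \<in> {..J}"
    show "real (m choose l) * real l^J * T^(J - l) \<le> T^J * \<mu>"
    proof (cases "l = 0")
      case True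
      then show ?thesis using J T mu by (simp add: power_0_left)
    next
      case False
      have cn: "m choose l \<le> m ^ l"
      proof (cases "l \<le> m")
        case True
        then show ?thesis by (rule binomial_le_pow)
      next
        case False
        then have "m < l" by simp
        then have "m choose l = 0" by (rule binomial_eq_0)
        then show ?thesis by (metis zero_le)
      qed
      have c: "real (m choose l) \<le> real m ^ l"
        using cn by (metis of_nat_le_iff of_nat_power)
      have "real (m choose l) * real l^J * T^(J - l) \<le> real m ^ l * real l^J * T^(J - l)"
        using c T by (intro mult_right_mono) auto
      also have "\<dots> = \<mu>^l * real l^J * (T^l * T^(J - l))" using mu by (simp add: power_mult_distrib)
      also have "T^l * T^(J - l) = T^J" using l by (simp add: power_add[symmetric])
      also have "\<mu>^l * real l^J * T^J \<le> \<mu> * T^J"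
        using term_bound[OF mu(2,3), of l] False T by (intro mult_right_mono) auto
      finally show ?thesis by (simp add: mult.commute)
    qed
  qed
  also have "\<dots> = (real J + 1) * T^J * \<mu>" by simp
  finally show ?thesis .
qed

lemma l2pow: "log 2 (2 ^ n :: real) = real n" by (rule log_pow_cancel) auto
lemma p5': "(2::real) powr 5 = 32" using powr_realpow[of 2 5] by simp
lemma p5: "2 powr (-5::real) = 1/32"
proof -
  have a: "2 powr (-5::real) = inverse (2 powr 5)" by (rule powr_minus)
  show ?thesis unfolding a p5' by simp
qed

theorem theorem26:
  fixes n :: nat and \<delta> \<alpha> :: real
  assumes "n \<ge> 1"
    and "0 < \<delta>" "\<delta> \<le> 1" "0 < \<alpha>" "\<alpha> \<le> 1"
    and "\<alpha> \<le> \<delta> / 2" "\<delta> \<le> 2 powr (-5)"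
    and "(2 * \<delta> / \<alpha>) * log 2 (1 / (2 * \<alpha>)) \<le> log 2 (2 ^ n)"
  shows "\<exists>A \<subseteq> cube n.
     \<delta> * 2 ^ n \<le> real (card A) \<and> real (card A) \<le> 8 * \<delta> * 2 ^ n \<and>
     real (card (large_spec n \<alpha> A)) \<ge> \<delta> / (8 * \<alpha> ^ 2) \<and>
     (\<forall>k::nat. 2 \<le> k \<and> real k \<le> (1/2) * log 2 (1 / (8 * \<delta>)) \<longrightarrow>
        real (Tk n k (large_spec n \<alpha> A)) \<le> 8 * \<delta> / \<alpha> ^ (2 * k))"
proof -
  have dp: "0 < \<delta>" and ap: "0 < \<alpha>" and ad: "\<alpha> \<le> \<delta> / 2" using assms by auto
  have d32: "\<delta> \<le> 1/32" using assms(7) p5 by simp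
  define x where "x = 1 / (2 * \<alpha>)"
  have xp: "x > 0" using ap by (simp add: x_def)
  have x32: "32 \<le> x"
  proof -
    have "\<alpha> \<le> 1/64" using ad d32 by simp
    then have "64 * \<alpha> \<le> 1" by simp
    then show ?thesis unfolding x_def using ap by (simp add: field_simps)
  qed
  have lx5: "5 \<le> log 2 x"
  proof -
    note p5'
    then show ?thesis using x32 xp by (subst le_log_iff) auto
  qed
  define t where "t = nat \<lfloor>log 2 x\<rfloor>"
  have fl5: "5 \<le> \<lfloor>log 2 x\<rfloor>" using lx5 by linarith
  have t_real: "real t = \<lfloor>log 2 x\<rfloor>" unfolding t_def using fl5 by simp
  have tle: "real t \<le> log 2 x" using t_real by linarith
  have tgt: "log 2 x < real t + 1" using t_real by linarith
  have t5: "5 \<le> t" using fl5 t_def by linarith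
  define T where "T = (2::real)^t"
  have Tp: "T > 0" by (simp add: T_def)
  have Tx: "T \<le> x"
  proof -
    have "2 powr real t \<le> x" using tle xp by (subst le_log_iff[symmetric]) auto
    then show ?thesis by (simp add: T_def powr_realpow)
  qed
  have xT: "x < 2 * T"
  proof -
    have "x < 2 powr (real t + 1)" using tgt xp by (subst log_less_iff[symmetric]) auto
    also have "2 powr (real t + 1) = 2 * T" by (simp add: T_def powr_add powr_realpow)
    finally show ?thesis .
  qed
  have T32: "32 \<le> T"
  proof -
    have "(2::real)^5 \<le> 2^t" using t5 by (intro power_increasing) auto
    then show ?thesis by (simp add: T_def)
  qed
  have aT: "2 * \<alpha> * T \<le> 1" using Tx ap unfolding x_def by (simp add: field_simps)
  have aT2: "1 < 4 * \<alpha> * T" using xT ap unfolding x_def by (simp add: field_simps)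
  define m where "m = nat \<lceil>3 * \<delta> * T\<rceil>"
  have p3: "0 < 3 * \<delta> * T" using dp Tp by simp
  have c0: "0 \<le> \<lceil>3 * \<delta> * T\<rceil>" using p3 by (subst zero_le_ceiling) linarith
  have mc: "real m = of_int \<lceil>3 * \<delta> * T\<rceil>" unfolding m_def using c0 by simp
  have m_ge: "3 * \<delta> * T \<le> real m" unfolding mc using ceiling_correct[of "3 * \<delta> * T"] by linarith
  have m_lt: "real m < 3 * \<delta> * T + 1" unfolding mc using ceiling_correct[of "3 * \<delta> * T"] by linarith
  have da: "2 * \<alpha> \<le> \<delta>" using ad by simp
  have m2: "2 \<le> m"
  proof -
    have "3 * \<delta> * T \<ge> 3 * (2 * \<alpha>) * T" using da Tp by (intro mult_right_mono) auto
    then have "3 * \<delta> * T > 3/2" using aT2 by linarith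
    then have "real m > 3/2" using m_ge by linarith
    then show ?thesis by linarith
  qed
  define \<mu> where "\<mu> = real m / T"
  have mu_m: "real m = \<mu> * T" unfolding \<mu>_def using Tp by simp
  have mu_ge: "3 * \<delta> \<le> \<mu>" unfolding \<mu>_def using m_ge Tp by (simp add: field_simps)
  have mu_lt: "\<mu> < 5 * \<delta>"
  proof -
    have "\<mu> < 3 * \<delta> + 1 / T" unfolding \<mu>_def using m_lt Tp by (simp add: field_simps)
    moreover have "1 / T < 4 * \<alpha>" using aT2 Tp by (simp add: field_simps)
    ultimately show ?thesis using da by linarith
  qed
  have mu_nn: "0 \<le> \<mu>" using mu_ge dp by linarith
  have mt: "m * t \<le> n"
  proof -
    have "real m \<le> 2 * \<delta> / \<alpha>"
    proof -
      have "3 * \<delta> * T \<le> 3 * \<delta> * x" using Tx dp by simp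
      also have "\<dots> = (3/2) * (\<delta> / \<alpha>)" unfolding x_def by simp
      finally have "real m < (3/2) * (\<delta> / \<alpha>) + 1" using m_lt by linarith
      moreover have "1 \<le> (1/2) * (\<delta> / \<alpha>)" using ad ap by (simp add: field_simps)
      ultimately show ?thesis by simp
    qed
    moreover have "0 \<le> real t" by simp
    ultimately have "real m * real t \<le> (2 * \<delta> / \<alpha>) * log 2 x"
      using tle by (intro mult_mono) auto
    also have "\<dots> \<le> real n" using assms(8) unfolding x_def l2pow .
    finally have "real (m * t) \<le> real n" by simp
    then show ?thesis by (simp only: of_nat_le_iff)
  qed
  define A where "A = Aset n t m"
  have Acube: "A \<subseteq> cube n" by (auto simp: A_def Aset_def)
  have TT: "(2::real)^t = T" by (simp add: T_def)
  have NT: "(2::real)^n = 2^(n - m*t) * T^m"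
  proof -
    have "(2::real)^n = 2^(n - m*t) * 2^(m*t)" using mt by (simp add: power_add[symmetric])
    also have "(2::real)^(m*t) = T^m" by (simp add: T_def power_mult[symmetric] mult.commute)
    finally show ?thesis .
  qed
  define P where "P = 1 / T"
  have P_pos: "0 < P" "P \<le> 1" using Tp T32 by (auto simp: P_def)
  have TP: "T - 1 = T * (1 - P)" using Tp by (simp add: P_def field_simps)
  have P2a: "2 * \<alpha> \<le> P" using aT Tp by (simp add: P_def field_simps)
  have mP: "real m * P = \<mu>" by (simp add: P_def \<mu>_def)
  define q where "q = (1 - P)^m"
  have cardA: "real (card A) = 2^n * (1 - q)"
  proof -
    have "real (card A) = 2^n - 2^(n - m*t) * (T - 1)^m" using card_A[OF mt] by (simp add: A_def TT)
    also have "(T - 1)^m = T^m * q" by (simp add: TP q_def power_mult_distrib)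
    finally show ?thesis using NT by (simp add: algebra_simps)
  qed
  have q_ge: "1 - \<mu> \<le> q"
    using bern[of "-P" m] P_pos mP by (simp add: q_def)
  have q_le: "q \<le> 1 - \<delta>"
  proof -
    have b: "1 + \<mu> \<le> (1 + P)^m" using bern[of P m] P_pos mP by simp
    have "q * (1 + P)^m = (1 - P*P)^m" by (simp add: q_def power_mult_distrib[symmetric] algebra_simps)
    also have "\<dots> \<le> 1" using P_pos by (intro power_le_one) (auto simp: mult_le_one)
    finally have c: "q * (1 + P)^m \<le> 1" .
    have q0: "0 \<le> q" using P_pos by (simp add: q_def)
    have "q * (1 + \<mu>) \<le> q * (1 + P)^m" using b q0 by (intro mult_left_mono) auto
    also have "\<dots> \<le> (1 - \<delta>) * (1 + \<mu>)"
    proof -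
      have "\<delta> * \<mu> \<le> \<mu> / 32" using mult_right_mono[OF d32 mu_nn] by simp
      moreover have "(1 - \<delta>) * (1 + \<mu>) = 1 + \<mu> - \<delta> - \<delta> * \<mu>" by (simp add: algebra_simps)
      ultimately have "1 \<le> (1 - \<delta>) * (1 + \<mu>)" using mu_ge mu_nn by linarith
      then show ?thesis using c by linarith
    qed
    finally show ?thesis using mu_nn by (simp add: mult_le_cancel_right)
  qed
  have card1: "\<delta> * 2^n \<le> real (card A)" using cardA q_le by simp
  have card2: "real (card A) \<le> 8 * \<delta> * 2^n"
  proof -
    have "1 - q \<le> 8 * \<delta>" using q_ge mu_lt dp by linarith
    then show ?thesis using cardA by simp
  qed
  have H1: "\<alpha> * 2^n \<le> real (card (Aset n t m))"
  proof -
    have "\<alpha> * 2^n \<le> \<delta> * 2^n" using ad dp by (intro mult_right_mono) auto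
    then show ?thesis using card1 unfolding A_def by linarith
  qed
  have H2: "\<alpha> * 2^n \<le> 2^(n - m*t) * (2^t - 1)^(m - 1)"
  proof -
    define r where "r = (1 - P)^(m - 1)"
    have r_ge: "1 - \<mu> \<le> r"
    proof -
      have "1 + real (m - 1) * (-P) \<le> r" using bern[of "-P" "m - 1"] P_pos by (simp add: r_def)
      moreover have "real (m - 1) * P \<le> \<mu>"
      proof -
        have "real (m - 1) * P = real m * P - P" using m2 by (simp add: of_nat_diff algebra_simps)
        then show ?thesis using mP P_pos by linarith
      qed
      ultimately show ?thesis by simp
    qed
    have r_half: "1/2 \<le> r" using r_ge mu_lt d32 by linarith
    have Tm: "T^m = T * T^(m - 1)" using m2 by (metis One_nat_def Suc_le_D le_trans one_le_numeral power_Suc diff_Suc_1)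
    have "(2::real)^(n - m*t) * (2^t - 1)^(m - 1) = 2^(n - m*t) * T^(m - 1) * r"
      by (simp add: TT TP r_def power_mult_distrib)
    also have "\<dots> = 2^n * P * r" using NT Tm Tp by (simp add: P_def field_simps)
    finally have e: "(2::real)^(n - m*t) * (2^t - 1)^(m - 1) = 2^n * P * r" .
    have "\<alpha> \<le> P * r"
    proof -
      have "2 * \<alpha> * (1/2) \<le> P * r" using P2a r_half ap by (intro mult_mono) auto
      then show ?thesis by simp
    qed
    then show ?thesis unfolding e by simp
  qed
  have H3: "2^(n - m*t) * (2^t)^(m - 2) < \<alpha> * 2^n"
  proof -
    have Tm: "T^m = T^2 * T^(m - 2)" using m2 by (metis le_add_diff_inverse power_add)
    have e: "(2::real)^(n - m*t) * (2^t)^(m - 2) = 2^n * (P * P)"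
      using NT Tm Tp by (simp add: TT P_def field_simps power2_eq_square)
    have "P < 4 * \<alpha>" using aT2 Tp by (simp add: P_def field_simps)
    then have "P * P < 4 * \<alpha> * (4 * \<alpha>)" using P_pos by (intro mult_strict_mono) auto
    also have "\<dots> \<le> \<alpha>"
    proof -
      have "16 * \<alpha> \<le> 1" using ad d32 by simp
      then have "\<alpha> * (16 * \<alpha>) \<le> \<alpha> * 1" using ap by (intro mult_left_mono) auto
      then show ?thesis by simp
    qed
    finally show ?thesis unfolding e by simp
  qed
  have spec: "large_spec n \<alpha> A = {r \<in> cube n. \<exists>i<m. toset r \<subseteq> blk t i}"
    unfolding A_def using spec_char[OF mt _ ap H1 H2 H3] m2 by simp
  have card3: "real (card (large_spec n \<alpha> A)) \<ge> \<delta> / (8 * \<alpha> ^ 2)"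
  proof -
    have "m * (2^t - 1) \<le> card (large_spec n \<alpha> A)" unfolding spec by (rule card_spec_lower[OF mt])
    then have "real m * (T - 1) \<le> real (card (large_spec n \<alpha> A))"
    proof -
      have o: "(1::nat) \<le> 2^t" by simp
      have "real (m * (2^t - 1)) = real m * (T - 1)" using o by (simp add: of_nat_diff TT)
      then show ?thesis using \<open>m * (2^t - 1) \<le> card (large_spec n \<alpha> A)\<close> by (metis of_nat_le_iff)
    qed
    moreover have "3 * \<delta> * T * (T - 1) \<le> real m * (T - 1)" using m_ge T32 by (intro mult_right_mono) auto
    moreover have "2 * \<delta> * (T * T) \<le> 3 * \<delta> * T * (T - 1)"
    proof -
      have "2 * T \<le> 3 * (T - 1)" using T32 by simp
      then have "(\<delta> * T) * (2 * T) \<le> (\<delta> * T) * (3 * (T - 1))" using dp Tp by (intro mult_left_mono) auto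
      then show ?thesis by (simp add: algebra_simps)
    qed
    moreover have "\<delta> / (8 * \<alpha> ^ 2) \<le> 2 * \<delta> * (T * T)"
    proof -
      have h: "1 \<le> 4 * \<alpha> * T" using aT2 by linarith
      have "1 * 1 \<le> (4 * \<alpha> * T) * (4 * \<alpha> * T)" using ap Tp by (intro mult_mono[OF h h]) auto
      then have "1 \<le> 16 * \<alpha>^2 * (T * T)" by (simp add: power2_eq_square algebra_simps)
      then have "\<delta> * 1 \<le> \<delta> * (16 * \<alpha>^2 * (T * T))" using dp by (intro mult_left_mono) auto
      then show ?thesis using ap by (simp add: field_simps)
    qed
    ultimately show ?thesis by linarith
  qed
  have Tkb: "real (Tk n k (large_spec n \<alpha> A)) \<le> 8 * \<delta> / \<alpha> ^ (2 * k)"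
    if k: "2 \<le> k" "real k \<le> (1/2) * log 2 (1 / (8 * \<delta>))" for k
  proof -
    let ?J = "2 * k"
    have J1: "1 \<le> ?J" using k by simp
    have muJ: "\<mu> * 2^?J \<le> 1"
    proof -
      have "real ?J \<le> log 2 (1 / (8 * \<delta>))" using k by simp
      then have "2 powr real ?J \<le> 1 / (8 * \<delta>)" using dp by (subst le_log_iff[symmetric]) auto
      moreover have e: "(2::real) powr real ?J = 2^?J" by (rule powr_realpow) simp
      ultimately have "(2::real)^?J \<le> 1 / (8 * \<delta>)" by (simp only: e)
      then have "(2::real)^?J * (8 * \<delta>) \<le> 1" using dp by (simp add: field_simps)
      moreover have "\<mu> * 2^?J \<le> 8 * \<delta> * 2^?J" using mu_lt dp by (intro mult_right_mono) auto
      moreover have "8 * \<delta> * 2^?J = (2::real)^?J * (8 * \<delta>)" by (rule mult.commute)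
      ultimately show ?thesis by linarith
    qed
    have "Tk n k (large_spec n \<alpha> A) \<le> (\<Sum>b\<in>Lab m ?J. 2^(t * (?J - card (set b))))"
      unfolding spec by (rule Tk_bound)
    also have "\<dots> \<le> (\<Sum>l\<le>?J. (m choose l) * l^?J * 2^(t * (?J - l)))" by (rule lab_sum)
    finally have "real (Tk n k (large_spec n \<alpha> A)) \<le> real (\<Sum>l\<le>?J. (m choose l) * l^?J * 2^(t * (?J - l)))"
      by (simp only: of_nat_le_iff)
    also have "\<dots> \<le> (real ?J + 1) * T^?J * \<mu>"
      by (rule final_sum[OF T_def Tp mu_m mu_nn muJ J1])
    finally have a: "real (Tk n k (large_spec n \<alpha> A)) \<le> (real ?J + 1) * T^?J * \<mu>" .
    have "(real ?J + 1) * T^?J * \<mu> * \<alpha>^?J = (real ?J + 1) * (T * \<alpha>)^?J * \<mu>"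
      by (simp add: power_mult_distrib)
    also have "\<dots> \<le> (real ?J + 1) * (1/2)^?J * \<mu>"
    proof -
      have "(T * \<alpha>)^?J \<le> (1/2)^?J" using aT Tp ap by (intro power_mono) (auto simp: field_simps)
      then show ?thesis using mu_nn by (intro mult_right_mono mult_left_mono) auto
    qed
    also have "\<dots> \<le> 1 * \<mu>"
    proof -
      have "?J < 2^?J" by (rule less_exp)
      then have "real ?J + 1 \<le> 2^?J" by (metis Suc_leI of_nat_Suc of_nat_le_iff of_nat_numeral of_nat_power add.commute)
      then have "(real ?J + 1) * (1/2)^?J \<le> 2^?J * (1/2)^?J" by (intro mult_right_mono) auto
      also have "\<dots> = 1" by (simp add: power_mult_distrib[symmetric])
      finally show ?thesis using mu_nn by (intro mult_right_mono) auto
    qed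
    also have "\<dots> \<le> 8 * \<delta>" using mu_lt dp by simp
    finally have b: "(real ?J + 1) * T^?J * \<mu> * \<alpha>^?J \<le> 8 * \<delta>" .
    have "real (Tk n k (large_spec n \<alpha> A)) * \<alpha>^?J \<le> 8 * \<delta>"
      using a b ap by (meson dual_order.trans mult_right_mono zero_le_power less_imp_le)
    then show ?thesis using ap by (simp add: pos_le_divide_eq)
  qed
  show ?thesis
    using Acube card1 card2 card3 Tkb by blast
qed

end
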